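(* Let $a_1,\ldots,a_{n+1}>0$, let $E=E(a_1,\ldots,a_n)\subset\mathbb{C}^n$, let $u=\sum_{j=1}^n\pi|z_j|^2/a_j$ on $\mathbb{C}^n$, and for $0<\varepsilon<1<\beta$ define $H_{\varepsilon,\beta}\colon E\to\mathbb{R}$ by $H_{\varepsilon,\beta}=\min\{a_{n+1}(\varepsilon+\beta u),\,a_{n+1}(1-u)\}$ and \[E^\circ_{H_{\varepsilon,\beta}}=\{(w,z)\in E\times\mathbb{C}\mid \pi|z|^2<H_{\varepsilon,\beta}(w)\}\subset\mathbb{C}^{n+1}.\] Then for any $0<\varepsilon<1<\beta$, $(E^\circ_{H_{\varepsilon,\beta}},\hat\lambda_0)$ is an open Liouville domain.
   Context: $E(a_1,\ldots,a_n)=\{(z_1,\ldots,z_n)\in\mathbb{C}^n\mid\sum_j\pi|z_j|^2/a_j\leq1\}$. $\hat\lambda_0=\frac12\sum_{j=1}^{n+1}(x_jdy_j-y_jdx_j)$ is the standard primitive on $\mathbb{C}^{n+1}$, $z_j=x_j+iy_j$. An open Liouville domain is a manifold without boundary $U$ with a 1-form $\lambda$ such that $d\lambda$ is symplectic, the flow $\mathcal{L}^t$ of the Liouville vector field $\mathcal{L}$ (defined by $d\lambda(\mathcal{L},\cdot)=\lambda$) exists on $U$ for all $t\leq0$, and $\mathcal{L}^t(U)$ has compact closure in $U$ for all $t<0$. *)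

theory Defs
  imports "HOL-Analysis.Analysis"
begin

text \<open>Points of C^n are complex^'n; C^(n+1) is (complex^'n) \<times> complex, the last
  factor being the (n+1)-st coordinate.\<close>

definition ellipsoid :: "real^'n \<Rightarrow> (complex^'n) set" where
  "ellipsoid a = {z. (\<Sum>j\<in>UNIV. pi * (cmod (z$j))^2 / a$j) \<le> 1}"

definition u_fun :: "real^'n \<Rightarrow> complex^'n \<Rightarrow> real" where
  "u_fun a z = (\<Sum>j\<in>UNIV. pi * (cmod (z$j))^2 / a$j)"

definition H_fun :: "real^'n \<Rightarrow> real \<Rightarrow> real \<Rightarrow> real \<Rightarrow> complex^'n \<Rightarrow> real" where
  "H_fun a b eps beta w = min (b * (eps + beta * u_fun a w)) (b * (1 - u_fun a w))"

definition E_circ :: "real^'n \<Rightarrow> real \<Rightarrow> real \<Rightarrow> real \<Rightarrow> ((complex^'n) \<times> complex) set" where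
  "E_circ a b eps beta = {(w, z). w \<in> ellipsoid a \<and> pi * (cmod z)^2 < H_fun a b eps beta w}"

text \<open>Standard primitive 1/2 sum (x_j dy_j - y_j dx_j), as a map point \<Rightarrow> tangent vector \<Rightarrow> real.\<close>
definition lambda0 :: "((complex^'n) \<times> complex) \<Rightarrow> ((complex^'n) \<times> complex) \<Rightarrow> real" where
  "lambda0 p v = 1/2 * ((\<Sum>j\<in>UNIV. Re (fst p $ j) * Im (fst v $ j) - Im (fst p $ j) * Re (fst v $ j))
                     + (Re (snd p) * Im (snd v) - Im (snd p) * Re (snd v)))"

definition one_form_on :: "'v::real_normed_vector set \<Rightarrow> ('v \<Rightarrow> 'v \<Rightarrow> real) \<Rightarrow> bool" where
  "one_form_on U lam \<longleftrightarrow> (\<forall>p\<in>U. linear (lam p)) \<and>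
     (\<forall>w. \<exists>D. (\<forall>p\<in>U. ((\<lambda>q. lam q w) has_derivative D p) (at p)) \<and> continuous_on U D)"

text \<open>Exterior derivative of a 1-form: d lam (v,w) = v(lam(w)) - w(lam(v)) (constant fields).\<close>
definition ext_d :: "('v::real_normed_vector \<Rightarrow> 'v \<Rightarrow> real) \<Rightarrow> 'v \<Rightarrow> 'v \<Rightarrow> 'v \<Rightarrow> real" where
  "ext_d lam p v w = frechet_derivative (\<lambda>q. lam q w) (at p) v - frechet_derivative (\<lambda>q. lam q v) (at p) w"

definition nondegenerate :: "('v::real_normed_vector \<Rightarrow> 'v \<Rightarrow> real) \<Rightarrow> bool" where
  "nondegenerate \<omega> \<longleftrightarrow> (\<forall>v. v \<noteq> 0 \<longrightarrow> (\<exists>w. \<omega> v w \<noteq> 0))"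

definition liouville_field :: "'v::real_normed_vector set \<Rightarrow> ('v \<Rightarrow> 'v \<Rightarrow> real) \<Rightarrow> ('v \<Rightarrow> 'v) \<Rightarrow> bool" where
  "liouville_field U lam L \<longleftrightarrow> (\<forall>p\<in>U. \<forall>w. ext_d lam p (L p) w = lam p w)"

text \<open>Open Liouville domain: U open (a manifold without boundary), d lam symplectic
  (exact hence closed; nondegenerate), the flow of the Liouville field exists on U
  for all t \<le> 0, and the image of U under the time-t flow has compact closure in U for t < 0.\<close>
definition open_liouville_domain :: "'v::real_normed_vector set \<Rightarrow> ('v \<Rightarrow> 'v \<Rightarrow> real) \<Rightarrow> bool" where
  "open_liouville_domain U lam \<longleftrightarrow>
     open U \<and> one_form_on U lam \<and> (\<forall>p\<in>U. nondegenerate (ext_d lam p)) \<and>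
     (\<exists>L. liouville_field U lam L \<and>
        (\<exists>\<phi>::real \<Rightarrow> 'v \<Rightarrow> 'v.
           (\<forall>p\<in>U. \<phi> 0 p = p \<and>
              (\<forall>t\<le>0. \<phi> t p \<in> U \<and>
                 ((\<lambda>s. \<phi> s p) has_vector_derivative L (\<phi> t p)) (at t within {..0}))) \<and>
           (\<forall>t<0. compact (closure (\<phi> t ` U)) \<and> closure (\<phi> t ` U) \<subseteq> U)))"

end

theory Submission
  imports Defs
begin

definition rot :: "((complex^'n) \<times> complex) \<Rightarrow> ((complex^'n) \<times> complex)" where
  "rot v = (\<chi> j. - \<i> * fst v $ j, - \<i> * snd v)"

lemma lambda0_inner: "lambda0 p v = (p \<bullet> rot v) / 2"
  unfolding lambda0_def rot_def inner_Pair[of "fst p" "snd p", simplified] inner_vec_def inner_complex_def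
  by simp

lemma rot_add: "rot (x + y) = rot x + rot y"
  unfolding rot_def by (simp add: vec_eq_iff algebra_simps)

lemma rot_scale: "rot (c *\<^sub>R x) = c *\<^sub>R rot x"
  unfolding rot_def by (simp add: vec_eq_iff complex_eq_iff)

lemma lambda0_linear1: "linear (\<lambda>q. lambda0 q w)"
  unfolding lambda0_inner by (rule linearI) (simp_all add: inner_add_left add_divide_distrib)

lemma lambda0_linear2: "linear (lambda0 p)"
  unfolding lambda0_inner by (rule linearI) (simp_all add: rot_add rot_scale inner_add_right add_divide_distrib)

lemma lambda0_antisym: "lambda0 w v = - lambda0 v w"
proof -
  have "(\<Sum>j\<in>UNIV. Re (fst w $ j) * Im (fst v $ j) - Im (fst w $ j) * Re (fst v $ j))
      = - (\<Sum>j\<in>UNIV. Re (fst v $ j) * Im (fst w $ j) - Im (fst v $ j) * Re (fst w $ j))"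
    unfolding sum_negf[symmetric] by (rule sum.cong) auto
  then show ?thesis unfolding lambda0_def by (simp add: algebra_simps)
qed

lemma lambda0_deriv: "((\<lambda>q. lambda0 q w) has_derivative (\<lambda>q. lambda0 q w)) (at p)"
  by (rule bounded_linear_imp_has_derivative[OF linear_conv_bounded_linear[THEN iffD1, OF lambda0_linear1]])

lemma ext_d_lambda0: "ext_d lambda0 p v w = 2 * lambda0 v w"
proof -
  have "frechet_derivative (\<lambda>q. lambda0 q w) (at p) = (\<lambda>q. lambda0 q w)" for w
    by (rule sym[OF frechet_derivative_at[OF lambda0_deriv]])
  then show ?thesis unfolding ext_d_def using lambda0_antisym[of w v] by simp
qed

lemma u_scale: "u_fun a (c *\<^sub>R w) = c^2 * u_fun a w"
  unfolding u_fun_def sum_distrib_left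
  by (rule sum.cong) (auto simp: power_mult_distrib)

lemma H_scale_strict:
  assumes "b > 0" "eps > 0" "0 < c" "c < 1"
  shows "c^2 * H_fun a b eps beta w < H_fun a b eps beta (c *\<^sub>R w)"
proof -
  have c2: "c^2 < 1" using assms by (simp add: power_less_one_iff)
  have "c^2 * (b * (eps + beta * u_fun a w)) < b * (eps + beta * u_fun a (c *\<^sub>R w))"
    using assms c2 by (simp add: u_scale algebra_simps)
  moreover have "c^2 * (b * (1 - u_fun a w)) < b * (1 - u_fun a (c *\<^sub>R w))"
    using assms c2 by (simp add: u_scale algebra_simps)
  moreover have "c^2 * min X Y = min (c^2 * X) (c^2 * Y)" for X Y :: real
    by (simp add: min_mult_distrib_left)
  ultimately show ?thesis unfolding H_fun_def by (simp add: min_def)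
qed

lemma H_scale:
  assumes "b > 0" "eps > 0" "0 < c" "c \<le> 1"
  shows "c^2 * H_fun a b eps beta w \<le> H_fun a b eps beta (c *\<^sub>R w)"
  using H_scale_strict[OF assms(1,2,3)] assms by (cases "c = 1") (auto simp: less_le)

lemma u_nonneg: assumes "\<forall>j. a$j > 0" shows "u_fun a w \<ge> 0"
  unfolding u_fun_def using assms by (intro sum_nonneg divide_nonneg_pos) auto

lemma E_circ_eq:
  assumes "\<forall>j. a$j > 0" "b > 0"
  shows "E_circ a b eps beta = {p. pi * (cmod (snd p))^2 < H_fun a b eps beta (fst p)}"
proof -
  have "w \<in> ellipsoid a" if "pi * (cmod z)^2 < H_fun a b eps beta w" for w z
  proof -
    have "0 \<le> pi * (cmod z)^2" by simp
    then have "0 < b * (1 - u_fun a w)" using that unfolding H_fun_def by linarith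
    then show ?thesis using assms unfolding ellipsoid_def u_fun_def
      by (simp add: zero_less_mult_iff)
  qed
  then show ?thesis unfolding E_circ_def by auto
qed

lemma cont_u: "continuous_on UNIV (u_fun a)"
  unfolding u_fun_def divide_inverse by (intro continuous_intros)

lemma cont_H: "continuous_on UNIV (H_fun a b eps beta)"
  unfolding H_fun_def by (intro continuous_intros cont_u[THEN continuous_on_subset]) auto


lemma lambda0_scale: "lambda0 (c *\<^sub>R p) w = c * lambda0 p w"
  using linear_scale[OF lambda0_linear1[of w], of c p] by simp

lemma lambda0_rot:
  "lambda0 v (\<chi> j. \<i> * fst v $ j, \<i> * snd v) = (v \<bullet> v) / 2"
  by (cases v) (simp add: lambda0_def inner_vec_def inner_complex_def power2_eq_square)

lemma K_bounded:
  assumes "\<forall>j. a$j > 0" "b > 0"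
  shows "bounded {p. pi * (cmod (snd p))^2 \<le> H_fun a b eps beta (fst p)}"
proof -
  let ?R = "(\<Sum>i\<in>UNIV. 1 + a$i / pi) + (1 + b / pi)"
  have le1: "x \<le> 1 + x^2" for x :: real
  proof -
    have "0 \<le> (x - 1)^2" by simp
    then have "2 * x \<le> x^2 + 1" by (simp add: power2_eq_square algebra_simps)
    moreover have "0 \<le> x^2" by simp
    ultimately show ?thesis by (cases "x \<le> 0") linarith+
  qed
  have "norm p \<le> ?R" if p: "pi * (cmod (snd p))^2 \<le> H_fun a b eps beta (fst p)" for p
  proof -
    obtain w z where pwz: "p = (w, z)" by (cases p)
    have "0 \<le> pi * (cmod z)^2" by simp
    then have h: "pi * (cmod z)^2 \<le> b * (1 - u_fun a w)" using p pwz unfolding H_fun_def by simp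
    have "0 \<le> b * (1 - u_fun a w)" using h \<open>0 \<le> pi * (cmod z)^2\<close> by linarith
    then have u1: "u_fun a w \<le> 1" using assms by (simp add: zero_le_mult_iff)
    have "0 \<le> b * u_fun a w" using u_nonneg[OF assms(1), of w] assms(2) by simp
    moreover have "b * (1 - u_fun a w) = b - b * u_fun a w" by (simp add: algebra_simps)
    ultimately have "pi * (cmod z)^2 \<le> b" using h by linarith
    then have z: "(cmod z)^2 \<le> b / pi" by (simp add: field_simps mult.commute)
    have wi: "cmod (w$i) \<le> 1 + a$i / pi" for i
    proof -
      have "pi * (cmod (w$i))^2 / a$i \<le> u_fun a w"
        unfolding u_fun_def using assms(1)
        by (intro member_le_sum[of i UNIV "\<lambda>j. pi * (cmod (w$j))^2 / a$j"]) (auto intro: divide_nonneg_pos)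
      then have "pi * (cmod (w$i))^2 / a$i \<le> 1" using u1 by linarith
      then have "(cmod (w$i))^2 \<le> a$i / pi" using assms(1)
        by (simp add: field_simps mult.commute)
      then show ?thesis using le1[of "cmod (w$i)"] by linarith
    qed
    have "norm w \<le> (\<Sum>i\<in>UNIV. norm (w$i))"
      unfolding norm_vec_def by (rule L2_set_le_sum) simp
    also have "\<dots> \<le> (\<Sum>i\<in>UNIV. 1 + a$i / pi)"
      using wi by (intro sum_mono) simp
    finally have "norm w \<le> (\<Sum>i\<in>UNIV. 1 + a$i / pi)" .
    moreover have "norm z \<le> 1 + b / pi" using le1[of "cmod z"] z by linarith
    ultimately show ?thesis unfolding pwz using norm_Pair_le[of w z] by linarith
  qed
  then show ?thesis unfolding bounded_iff by blast
qed

theorem proposition5p1: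
  fixes a :: "real^'n" and b eps beta :: real
  assumes "\<forall>j. a$j > 0" and "b > 0"
    and "0 < eps" and "eps < 1" and "1 < beta"
  shows "open_liouville_domain (E_circ a b eps beta) lambda0"
proof -
  let ?H = "H_fun a b eps beta"
  define U where "U = E_circ a b eps beta"
  define K where "K = {p::(complex^'n) \<times> complex. pi * (cmod (snd p))^2 \<le> ?H (fst p)}"
  have Ueq: "U = {p. pi * (cmod (snd p))^2 < ?H (fst p)}"
    unfolding U_def using E_circ_eq[OF assms(1,2)] by simp
  have contH: "continuous_on UNIV (\<lambda>p::(complex^'n) \<times> complex. ?H (fst p))"
    by (rule continuous_on_compose2[OF cont_H]) (auto intro: continuous_intros)
  have openU: "open U" unfolding Ueq
    by (rule open_Collect_less[OF _ contH]) (intro continuous_intros)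
  have closedK: "closed K" unfolding K_def
    by (rule closed_Collect_le[OF _ contH]) (intro continuous_intros)
  have bK: "bounded K" unfolding K_def by (rule K_bounded[OF assms(1,2)])
  have UK: "U \<subseteq> K" unfolding Ueq K_def by auto
  have scale_in: "c *\<^sub>R p \<in> U" if "p \<in> U" "0 < c" "c \<le> 1" for p c
  proof -
    obtain w z where pwz: "p = (w, z)" by (cases p)
    have "pi * (cmod z)^2 < ?H w" using that pwz Ueq by auto
    then have "c^2 * (pi * (cmod z)^2) < c^2 * ?H w" using that by simp
    also have "\<dots> \<le> ?H (c *\<^sub>R w)" using H_scale[OF assms(2,3) that(2,3)] .
    finally show ?thesis using pwz that Ueq by (simp add: power_mult_distrib algebra_simps)
  qed
  have scale_K: "c *\<^sub>R p \<in> U" if "p \<in> K" "0 < c" "c < 1" for p c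
  proof -
    obtain w z where pwz: "p = (w, z)" by (cases p)
    have "pi * (cmod z)^2 \<le> ?H w" using that pwz K_def by auto
    then have "c^2 * (pi * (cmod z)^2) \<le> c^2 * ?H w" using that by simp
    also have "\<dots> < ?H (c *\<^sub>R w)" using H_scale_strict[OF assms(2,3) that(2,3)] .
    finally show ?thesis using pwz that Ueq by (simp add: power_mult_distrib algebra_simps)
  qed
  have oneform: "one_form_on U lambda0"
    unfolding one_form_on_def
  proof (intro conjI ballI allI)
    show "linear (lambda0 p)" for p by (rule lambda0_linear2)
    fix w
    show "\<exists>D. (\<forall>p\<in>U. ((\<lambda>q. lambda0 q w) has_derivative D p) (at p)) \<and> continuous_on U D"
      by (rule exI[of _ "\<lambda>p q. lambda0 q w"]) (simp add: lambda0_deriv)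
  qed
  have nondeg: "nondegenerate (ext_d lambda0 p)" for p :: "(complex^'n) \<times> complex"
    unfolding nondegenerate_def
  proof (intro allI impI)
    fix v :: "(complex^'n) \<times> complex" assume "v \<noteq> 0"
    then have "v \<bullet> v > 0" by simp
    then show "\<exists>w. ext_d lambda0 p v w \<noteq> 0"
      by (intro exI[of _ "(\<chi> j. \<i> * fst v $ j, \<i> * snd v)"]) (simp add: ext_d_lambda0 lambda0_rot)
  qed
  define L where "L = (\<lambda>p::(complex^'n) \<times> complex. (1/2::real) *\<^sub>R p)"
  have lf: "liouville_field U lambda0 L"
    unfolding liouville_field_def L_def by (simp add: ext_d_lambda0 lambda0_scale)
  define phi where "phi = (\<lambda>(t::real) (p::(complex^'n) \<times> complex). exp (t/2) *\<^sub>R p)"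
  have flow: "\<forall>p\<in>U. phi 0 p = p \<and>
              (\<forall>t\<le>0. phi t p \<in> U \<and>
                 ((\<lambda>s. phi s p) has_vector_derivative L (phi t p)) (at t within {..0}))"
  proof (intro ballI conjI allI impI)
    fix p assume "p \<in> U"
    show "phi 0 p = p" by (simp add: phi_def)
  next
    fix p t assume p: "p \<in> U" and t: "(t::real) \<le> 0"
    show "phi t p \<in> U" unfolding phi_def using scale_in[OF p, of "exp (t/2)"] t by simp
  next
    fix p t assume p: "p \<in> U" and t: "(t::real) \<le> 0"
    have d: "((\<lambda>s. exp (s/2)) has_real_derivative exp (t/2) * (1/2)) (at t within {..0})"
      by (auto intro!: derivative_eq_intros)
    have "((\<lambda>s. exp (s/2) *\<^sub>R p) has_vector_derivative exp (t/2) *\<^sub>R 0 + (exp (t/2) * (1/2)) *\<^sub>R p) (at t within {..0})"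
      by (rule has_vector_derivative_scaleR[OF d has_vector_derivative_const])
    then show "((\<lambda>s. phi s p) has_vector_derivative L (phi t p)) (at t within {..0})"
      by (simp add: phi_def L_def mult.commute)
  qed
  have comp: "\<forall>t<0. compact (closure (phi t ` U)) \<and> closure (phi t ` U) \<subseteq> U"
  proof (intro allI impI conjI)
    fix t :: real assume t: "t < 0"
    have img: "phi t ` U = (*\<^sub>R) (exp (t/2)) ` U" unfolding phi_def by auto
    have bU: "bounded U" using bK UK bounded_subset by blast
    show "compact (closure (phi t ` U))" unfolding img
      by (intro compact_closure[THEN iffD2] bounded_scaling bU)
    have "closure (phi t ` U) = (*\<^sub>R) (exp (t/2)) ` closure U" unfolding img closure_scaleR ..
    also have "\<dots> \<subseteq> (*\<^sub>R) (exp (t/2)) ` K" using closure_minimal[OF UK closedK] by auto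
    also have "\<dots> \<subseteq> U" using scale_K t by auto
    finally show "closure (phi t ` U) \<subseteq> U" .
  qed
  show ?thesis unfolding U_def[symmetric] open_liouville_domain_def
    using openU oneform nondeg lf flow comp by blast
qed

end
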